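(* Let $n\geq 2$ and let $A\in SL(2,\mathbb{Z})$ be a hyperbolic matrix with an eigenvalue $\lambda>n$, inducing the Anosov automorphism $h$ of $\mathbb{T}^2=\mathbb{R}^2/\mathbb{Z}^2$. Then there is no homeomorphism $f$ of $\mathbb{T}^2$ such that $hfh^{-1}=f^n$ and the homomorphism $BS(1,n)=\langle a,b\mid aba^{-1}=b^n\rangle\to\mathrm{Homeo}(\mathbb{T}^2)$, $a\mapsto h$, $b\mapsto f$, is injective. *)

theory Defs
  imports "HOL-Analysis.Analysis"
begin

text \<open>The 2-torus R^2/Z^2, realised (homeomorphically) as S^1 x S^1 in C x C.\<close>
definition torus :: "(complex \<times> complex) set" where
  "torus = {(z, w). cmod z = 1 \<and> cmod w = 1}"

text \<open>The toral automorphism induced by the integer matrix [[a,b],[c,d]]: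
  (x,y) mod Z^2 maps to (a x + b y, c x + d y) mod Z^2; in multiplicative
  coordinates z = e^(2 pi i x), w = e^(2 pi i y).\<close>
definition torus_aut :: "int \<Rightarrow> int \<Rightarrow> int \<Rightarrow> int \<Rightarrow> complex \<times> complex \<Rightarrow> complex \<times> complex" where
  "torus_aut a b c d = (\<lambda>(z, w). (z powi a * w powi b, z powi c * w powi d))"

text \<open>Words in the generators a, b of BS(1,n) and their inverses
  (True = generator, False = its inverse).\<close>
datatype gen = GA | GB

type_synonym word = "(gen \<times> bool) list"

inductive bs_eq :: "nat \<Rightarrow> word \<Rightarrow> word \<Rightarrow> bool" for n :: nat where
  bs_refl: "bs_eq n u u"
| bs_sym: "bs_eq n u v \<Longrightarrow> bs_eq n v u"
| bs_trans: "bs_eq n u v \<Longrightarrow> bs_eq n v w \<Longrightarrow> bs_eq n u w"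
| bs_cancel: "bs_eq n (u @ [(x, e), (x, \<not> e)] @ v) (u @ v)"
| bs_rel: "bs_eq n (u @ [(GA, True), (GB, True), (GA, False)] @ v) (u @ replicate n (GB, True) @ v)"

fun eval_word :: "('x \<Rightarrow> 'x) \<Rightarrow> ('x \<Rightarrow> 'x) \<Rightarrow> ('x \<Rightarrow> 'x) \<Rightarrow> ('x \<Rightarrow> 'x) \<Rightarrow> word \<Rightarrow> 'x \<Rightarrow> 'x" where
  "eval_word h h' f f' [] = id"
| "eval_word h h' f f' ((g, e) # ws) =
     (case (g, e) of (GA, True) \<Rightarrow> h | (GA, False) \<Rightarrow> h' | (GB, True) \<Rightarrow> f | (GB, False) \<Rightarrow> f')
     \<circ> eval_word h h' f f' ws"

end

theory Submission
  imports Defs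
begin


type_synonym v2 = "real \<times> real"

definition pp :: "v2 \<Rightarrow> complex \<times> complex" where
  "pp z = (cis (2*pi* fst z), cis (2*pi* snd z))"

definition isZ2 :: "v2 \<Rightarrow> bool" where
  "isZ2 z \<longleftrightarrow> fst z \<in> \<int> \<and> snd z \<in> \<int>"

type_synonym imat = "int \<times> int \<times> int \<times> int"

definition mv :: "imat \<Rightarrow> v2 \<Rightarrow> v2" where
  "mv M z = (case M of (a,b,c,d) \<Rightarrow> (of_int a* fst z + of_int b* snd z, of_int c* fst z + of_int d* snd z))"

lemma pp_torus: "pp z \<in> torus"
  by (simp add: pp_def torus_def)

lemma cis_eq_iff_Z: "cis (2*pi*x) = cis (2*pi*y) \<longleftrightarrow> x - y \<in> \<int>"
proof -
  have "cis (2*pi*x) = cis (2*pi*y) \<longleftrightarrow> cis (2*pi*(x-y)) = 1"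
  proof -
    have "cis (2*pi*x) = cis (2*pi*y) \<longleftrightarrow> cis (2*pi*x) / cis (2*pi*y) = 1"
      using cis_neq_zero[of "2*pi*y"] by (simp add: divide_eq_1_iff)
    also have "cis (2*pi*x) / cis (2*pi*y) = cis (2*pi*(x-y))"
      by (simp add: cis_divide right_diff_distrib)
    finally show ?thesis .
  qed
  also have "\<dots> \<longleftrightarrow> exp (\<i> * complex_of_real (2*pi*(x-y))) = 1"
    by (simp add: cis_conv_exp)
  also have "\<dots> \<longleftrightarrow> (\<exists>n::int. 2*pi*(x-y) = of_int (2*n)*pi)"
    by (simp add: exp_eq_1)
  also have "\<dots> \<longleftrightarrow> x - y \<in> \<int>"
  proof
    assume "\<exists>n::int. 2*pi*(x-y) = of_int (2*n)*pi"
    then obtain n::int where "2*pi*(x-y) = of_int (2*n)*pi" by blast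
    hence e: "(2*pi)*(x-y) = (2*pi)* of_int n" by (simp add: algebra_simps)
    have "2*pi \<noteq> 0" by simp
    hence "x - y = of_int n" using e mult_cancel_left by blast
    thus "x - y \<in> \<int>" by simp
  next
    assume "x - y \<in> \<int>"
    then obtain n where "x - y = of_int n" by (auto elim: Ints_cases)
    thus "\<exists>n::int. 2*pi*(x-y) = of_int (2*n)*pi" by (intro exI[of _ n]) simp
  qed
  finally show ?thesis .
qed

lemma pp_eq_iff: "pp x = pp y \<longleftrightarrow> isZ2 (x - y)"
  by (simp add: pp_def isZ2_def cis_eq_iff_Z)

lemma torus_pp: assumes "p \<in> torus" shows "\<exists>x. pp x = p"
proof -
  obtain z w where p: "p = (z,w)" "cmod z = 1" "cmod w = 1" using assms by (auto simp: torus_def)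
  have "z = cis (2*pi*(Arg z/(2*pi)))" using p rcis_cmod_Arg[of z] by (simp add: rcis_def)
  moreover have "w = cis (2*pi*(Arg w/(2*pi)))" using p rcis_cmod_Arg[of w] by (simp add: rcis_def)
  ultimately have "pp (Arg z/(2*pi), Arg w/(2*pi)) = p" by (simp add: pp_def p)
  thus ?thesis by blast
qed

lemma cis_powi: "cis t powi k = cis (of_int k * t)"
  by (simp add: cis_conv_exp exp_power_int algebra_simps)

lemma torus_aut_pp: "torus_aut a b c d (pp z) = pp (mv (a,b,c,d) z)"
  by (simp add: torus_aut_def pp_def mv_def cis_powi cis_mult algebra_simps)

lemma continuous_pp: "continuous_on UNIV pp"
proof -
  have e: "pp = (\<lambda>z. (cis (2*pi* fst z), cis (2*pi* snd z)))" by (simp add: fun_eq_iff pp_def)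
  show ?thesis unfolding e by (intro continuous_intros)
qed

lemma lift_circle:
  fixes g :: "v2 \<Rightarrow> complex"
  assumes "continuous_on UNIV g" "\<And>x. cmod (g x) = 1"
  obtains G where "continuous_on UNIV G" "\<And>x. g x = cis (2*pi*G x)"
proof -
  have sc: "simply_connected (UNIV::v2 set)" by (rule convex_imp_simply_connected[OF convex_UNIV])
  have lp: "locally path_connected (UNIV::v2 set)" by (rule locally_path_connected_UNIV)
  have nz: "g x \<noteq> 0" for x using assms(2)[of x] by auto
  obtain L where L1: "continuous_on UNIV L" and L2: "\<And>x. x \<in> UNIV \<Longrightarrow> g x = exp (L x)"
    apply (rule continuous_logarithm_on_simply_connected[OF assms(1) sc lp])
     apply (rule nz)
    by blast
  have L: "continuous_on UNIV L" "\<And>x. g x = exp (L x)" using L1 L2 by auto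
  have "exp (Re (L x)) = 1" for x using assms(2)[of x] unfolding L(2) by (simp only: norm_exp_eq_Re)
  hence "Re (L x) = 0" for x by simp
  hence "L x = \<i> * complex_of_real (Im (L x))" for x by (simp add: complex_eq_iff)
  hence "g x = cis (Im (L x))" for x
    using L(2)[of x] by (simp add: cis_conv_exp)
  moreover have "2*pi*(Im (L x)/(2*pi)) = Im (L x)" for x by simp
  ultimately have "g x = cis (2*pi*(Im (L x)/(2*pi)))" for x by simp
  moreover have "continuous_on UNIV (\<lambda>x. Im (L x)/(2*pi))"
    by (intro continuous_intros L(1)) auto
  ultimately show ?thesis using that by blast
qed

lemma lift_map:
  assumes "continuous_on torus f" "f ` torus \<subseteq> torus"
  obtains F where "continuous_on UNIV F" "\<And>x. pp (F x) = f (pp x)"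
proof -
  have c: "continuous_on UNIV (f \<circ> pp)"
    using continuous_on_compose2[OF assms(1) continuous_pp] pp_torus by (simp add: o_def image_subset_iff)
  have t: "f (pp x) \<in> torus" for x using assms(2) pp_torus by blast
  have n1: "cmod (fst (f (pp x))) = 1" "cmod (snd (f (pp x))) = 1" for x
    using t[of x] by (auto simp: torus_def)
  have c1: "continuous_on UNIV (\<lambda>x. fst (f (pp x)))"
    using continuous_on_fst[OF c] by (simp add: o_def)
  have c2: "continuous_on UNIV (\<lambda>x. snd (f (pp x)))"
    using continuous_on_snd[OF c] by (simp add: o_def)
  obtain G1 where G1: "continuous_on UNIV G1" "\<And>x. fst (f (pp x)) = cis (2*pi*G1 x)"
    using lift_circle[OF c1 n1(1)] by blast
  obtain G2 where G2: "continuous_on UNIV G2" "\<And>x. snd (f (pp x)) = cis (2*pi*G2 x)"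
    using lift_circle[OF c2 n1(2)] by blast
  have "continuous_on UNIV (\<lambda>x. (G1 x, G2 x))" by (intro continuous_intros G1 G2)
  moreover have "pp (G1 x, G2 x) = f (pp x)" for x
    unfolding pp_def fst_conv snd_conv G1(2)[symmetric] G2(2)[symmetric] by simp
  ultimately show ?thesis using that by blast
qed


fun mmul :: "imat \<Rightarrow> imat \<Rightarrow> imat" where
  "mmul (a,b,c,d) (e,f,g,h) = (a*e + b*g, a*f + b*h, c*e + d*g, c*f + d*h)"

definition I2 :: imat where "I2 = (1,0,0,1)"

fun mpow :: "imat \<Rightarrow> nat \<Rightarrow> imat" where
  "mpow M 0 = I2"
| "mpow M (Suc k) = mmul M (mpow M k)"

fun tr :: "imat \<Rightarrow> int" where "tr (a,b,c,d) = a + d"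
fun det :: "imat \<Rightarrow> int" where "det (a,b,c,d) = a*d - b*c"
fun adj :: "imat \<Rightarrow> imat" where "adj (a,b,c,d) = (d, -b, -c, a)"

lemma mmul_assoc: "mmul (mmul A B) C = mmul A (mmul B C)"
  by (cases A; cases B; cases C) (simp add: algebra_simps)

lemma mmul_I2 [simp]: "mmul I2 A = A" "mmul A I2 = A"
  by (cases A; simp add: I2_def)+

lemma mpow_add: "mpow M (i + j) = mmul (mpow M i) (mpow M j)"
  by (induction i) (simp_all add: mmul_assoc)

lemma mpow_mult: "mpow M (i * j) = mpow (mpow M i) j"
proof (induction j)
  case (Suc j) thus ?case by (simp add: mpow_add)
qed simp

lemma tr_rec: "tr (mpow M (Suc (Suc k))) = tr M * tr (mpow M (Suc k)) - det M * tr (mpow M k)"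
proof -
  obtain a b c d where M: "M = (a,b,c,d)" by (cases M) auto
  obtain p q r s where P: "mpow M k = (p,q,r,s)" by (cases "mpow M k") auto
  have e: "mpow M (Suc (Suc k)) = mmul M (mmul M (p,q,r,s))" "mpow M (Suc k) = mmul M (p,q,r,s)"
    using P by simp_all
  show ?thesis unfolding e P by (simp add: M algebra_simps)
qed

lemma adj_right: "mmul A (adj A) = (det A, 0, 0, det A)"
  by (cases A) (simp add: algebra_simps)

lemma tr_conj: "tr (mmul (mmul A B) (adj A)) = det A * tr B"
  by (cases A; cases B) (simp add: algebra_simps)

lemma seq_grow3:
  fixes s :: "nat \<Rightarrow> int"
  assumes "s 0 = 2" "s 1 = t" "\<And>k. s (Suc (Suc k)) = t * s (Suc k) - d * s k"
    and "d = 1 \<or> d = -1" and "\<bar>t\<bar> \<ge> 3"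
  shows "\<bar>s k\<bar> < \<bar>s (Suc k)\<bar>"
proof (induction k)
  case 0 thus ?case using assms by simp
next
  case (Suc k)
  have "\<bar>s (Suc (Suc k))\<bar> \<ge> \<bar>t\<bar> * \<bar>s (Suc k)\<bar> - \<bar>s k\<bar>"
    using assms(3)[of k] assms(4) by (auto simp: abs_mult[symmetric] abs_triangle_ineq4 intro!: order_trans[OF _ abs_triangle_ineq4])
  moreover have "\<bar>t\<bar> * \<bar>s (Suc k)\<bar> \<ge> 3 * \<bar>s (Suc k)\<bar>" using assms(5) by (intro mult_right_mono) auto
  ultimately show ?case using Suc by linarith
qed

lemma seq_pos:
  fixes s :: "nat \<Rightarrow> int"
  assumes "s 0 = 2" "s 1 = t" "\<And>k. s (Suc (Suc k)) = t * s (Suc k) + s k" and "t \<ge> 1"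
  shows "s k > 0 \<and> s (Suc k) > 0"
proof (induction k)
  case 0 thus ?case using assms by simp
next
  case (Suc k)
  have "s (Suc (Suc k)) > 0" using assms(3)[of k] Suc assms(4) by (smt (verit) mult_pos_pos)
  thus ?case using Suc by simp
qed

lemma grow_to_ne:
  fixes s :: "nat \<Rightarrow> int"
  assumes "\<And>k. k \<ge> 1 \<Longrightarrow> \<bar>s k\<bar> < \<bar>s (Suc k)\<bar>" "n \<ge> 2"
  shows "\<bar>s n\<bar> \<noteq> \<bar>s 1\<bar>"
proof -
  have "\<bar>s 1\<bar> < \<bar>s (Suc (1 + j))\<bar>" for j
  proof (induction j)
    case 0 thus ?case using assms(1)[of 1] by simp
  next
    case (Suc j) thus ?case using assms(1)[of "Suc (1 + j)"] by simp
  qed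
  from this[of "n - 2"] assms(2) show ?thesis by (simp add: Suc_diff_Suc numeral_2_eq_2)
qed

lemma seq_ne:
  fixes s :: "nat \<Rightarrow> int"
  assumes "s 0 = 2" "s 1 = t" "\<And>k. s (Suc (Suc k)) = t * s (Suc k) - d * s k"
    and "d = 1 \<or> d = -1" and "\<bar>t\<bar> \<ge> 3 \<or> (d = -1 \<and> t \<noteq> 0)" and "n \<ge> 2"
  shows "\<bar>s n\<bar> \<noteq> \<bar>s 1\<bar>"
proof (cases "\<bar>t\<bar> \<ge> 3")
  case True
  show ?thesis by (rule grow_to_ne[OF _ assms(6)]) (rule seq_grow3[OF assms(1-4) True])
next
  case False
  hence d: "d = -1" and t0: "t \<noteq> 0" using assms(5) by auto
  show ?thesis
  proof (cases "t > 0")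
    case True
    have rec: "s (Suc (Suc k)) = t * s (Suc k) + s k" for k using assms(3)[of k] d by simp
    have pos: "s k > 0 \<and> s (Suc k) > 0" for k by (rule seq_pos[OF assms(1,2) rec]) (use True in simp)
    show ?thesis
    proof (rule grow_to_ne[OF _ assms(6)])
      fix k :: nat assume "k \<ge> 1"
      then obtain j where k: "k = Suc j" by (cases k) auto
      have "s (Suc k) = t * s k + s j" using rec[of j] k by simp
      moreover have "t * s k \<ge> 1 * s k" using True pos[of k] by (intro mult_right_mono) auto
      ultimately have "s k < s (Suc k)" using pos[of j] by linarith
      thus "\<bar>s k\<bar> < \<bar>s (Suc k)\<bar>" using pos[of k] by simp
    qed
  next
    case False
    define s' where "s' k = (-1)^k * s k" for k
    have rec: "s' (Suc (Suc k)) = (-t) * s' (Suc k) + s' k" for k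
      using assms(3)[of k] d by (simp add: s'_def algebra_simps)
    have pos: "s' k > 0 \<and> s' (Suc k) > 0" for k
      by (rule seq_pos[of s' "-t", OF _ _ rec]) (use False t0 assms(1,2) in \<open>auto simp: s'_def\<close>)
    have ab: "\<bar>s' k\<bar> = \<bar>s k\<bar>" for k by (simp add: s'_def abs_mult)
    show ?thesis
    proof (rule grow_to_ne[OF _ assms(6)])
      fix k :: nat assume "k \<ge> 1"
      then obtain j where k: "k = Suc j" by (cases k) auto
      have "s' (Suc k) = (-t) * s' k + s' j" using rec[of j] k by simp
      moreover have "(-t) * s' k \<ge> 1 * s' k" using False t0 pos[of k] by (intro mult_right_mono) auto
      ultimately have "s' k < s' (Suc k)" using pos[of j] by linarith
      thus "\<bar>s k\<bar> < \<bar>s (Suc k)\<bar>" using pos[of k] ab[of k] ab[of "Suc k"] by simp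
    qed
  qed
qed


lemma ad1: "(a::int) * d = 1 \<Longrightarrow> \<bar>a + d\<bar> \<le> 2"
  using zmult_eq_1_iff by fastforce

lemma quad_no_sol:
  fixes P Q T :: int
  assumes "P^2 - T*P*Q + Q^2 = 0" "\<bar>T\<bar> > 2"
  shows "Q = 0"
proof (rule ccontr)
  assume Q: "Q \<noteq> 0"
  obtain g P' Q' where g: "g \<noteq> 0" "P = g * P'" "Q = g * Q'" "coprime P' Q'"
    using Q by (metis gcd_coprime_exists gcd_eq_0_iff mult.commute)
  have "g^2 * (P'^2 - T*P'*Q' + Q'^2) = 0" using assms(1) g by (simp add: algebra_simps power2_eq_square)
  hence e: "P'^2 - T*P'*Q' + Q'^2 = 0" using g(1) by simp
  have "P'^2 = Q' * (T*P' - Q')" using e by (simp add: algebra_simps power2_eq_square)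
  hence "Q' dvd P'^2" by (rule dvdI)
  hence q1: "\<bar>Q'\<bar> = 1" using g(4)
    by (meson coprime_absorb_right coprime_def coprime_power_right_iff zdvd1_eq coprime_commute)
  have "Q'^2 = P' * (T*Q' - P')" using e by (simp add: algebra_simps power2_eq_square)
  hence "P' dvd Q'^2" by (rule dvdI)
  hence p1: "\<bar>P'\<bar> = 1" using g(4)
    by (meson coprime_absorb_right coprime_def coprime_power_right_iff zdvd1_eq)
  have "P'^2 = 1" "Q'^2 = 1" using p1 q1 abs_mult_self_eq[of P'] abs_mult_self_eq[of Q'] by (simp_all add: power2_eq_square)
  hence "T * P' * Q' = 2" using e by simp
  hence "\<bar>T\<bar> * \<bar>P'\<bar> * \<bar>Q'\<bar> = 2" by (metis abs_mult abs_numeral)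
  thus False using p1 q1 assms(2) by simp
qed

lemma no_rat_eig:
  fixes a b c d x1 x2 :: int
  assumes "a*d - b*c = 1" "\<bar>a + d\<bar> > 2" "(x1, x2) \<noteq> (0, 0)"
    and par: "x1 * (c*x1 + d*x2) = x2 * (a*x1 + b*x2)"
  shows False
proof (cases "x1 = 0")
  case False
  define P where "P = a*x1 + b*x2"
  have "P^2 - (a+d)*P*x1 + x1^2 = x1 * (x1 * (1 - (a*d - b*c)))"
    using par unfolding P_def by (simp add: algebra_simps power2_eq_square) algebra
  hence "P^2 - (a+d)*P*x1 + x1^2 = 0" using assms(1) by simp
  thus False using quad_no_sol[OF _ assms(2)] False by blast
next
  case True
  hence x2: "x2 \<noteq> 0" using assms(3) by simp
  define P where "P = c*x1 + d*x2"
  have "P^2 - (a+d)*P*x2 + x2^2 = x2 * (x2 * (1 - (a*d - b*c)))"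
  proof -
    have "b = 0" using par True x2 by simp
    thus ?thesis using True unfolding P_def by (simp add: algebra_simps power2_eq_square)
  qed
  hence "P^2 - (a+d)*P*x2 + x2^2 = 0" using assms(1) by simp
  thus False using quad_no_sol[OF _ assms(2)] x2 by blast
qed


lemma mpow_I2[simp]: "mpow I2 k = I2"
  by (induction k) simp_all

lemma parabolic:
  assumes dA: "det A = 1" and tA: "\<bar>tr A\<bar> > 2" and rel: "mmul A B = mmul (mpow B n) A"
    and dB: "det B = 1" and tB: "tr B = 2" and n: "n \<ge> 1"
  shows "B = I2"
proof -
  obtain a b c d where A: "A = (a,b,c,d)" by (cases A) auto
  obtain p q r s where B: "B = (p,q,r,s)" by (cases B) auto
  have s: "s = 2 - p" using tB B by simp
  have qr: "q*r = 2*p - p*p - 1" using dB B s by (simp add: algebra_simps)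
  have pw: "mpow B k = (1 + int k*(p-1), int k*q, int k*r, 1 + int k*(s-1))" for k
  proof (induction k)
    case 0 thus ?case by (simp add: I2_def)
  next
    case (Suc k)
    have "p * (1 + int k * (p - 1)) + q * (int k * r) = 1 + int (Suc k) * (p - 1)"
      using qr by (simp add: algebra_simps) algebra
    moreover have "p * (int k * q) + q * (1 + int k * (s - 1)) = int (Suc k) * q"
      by (simp add: algebra_simps s)
    moreover have "r * (1 + int k * (p - 1)) + s * (int k * r) = int (Suc k) * r"
      by (simp add: algebra_simps s)
    moreover have "r * (int k * q) + s * (1 + int k * (s - 1)) = 1 + int (Suc k) * (s - 1)"
      using qr s by (simp add: algebra_simps) algebra
    ultimately show ?case using Suc by (simp add: B)
  qed
  define e where "e = p - 1"
  define f where "f = q"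
  define g where "g = r"
  have s1: "s - 1 = -e" using s e_def by simp
  have efg: "e*e + f*g = 0" using qr by (simp add: e_def f_def g_def algebra_simps)
  have R: "a*p + b*r = (1 + int n*(p-1))*a + int n*q*c"
          "a*q + b* s = (1 + int n*(p-1))*b + int n*q*d"
          "c*p + d*r = int n*r*a + (1 + int n*(s-1))*c"
          "c*q + d* s = int n*r*b + (1 + int n*(s-1))*d"
  proof -
    have "mmul (a,b,c,d) (p,q,r,s) = mmul (1 + int n*(p-1), int n*q, int n*r, 1 + int n*(s-1)) (a,b,c,d)"
      using rel pw[of n] by (simp only: A B)
    thus "a*p + b*r = (1 + int n*(p-1))*a + int n*q*c"
          "a*q + b * s = (1 + int n*(p-1))*b + int n*q*d"
          "c*p + d*r = int n*r*a + (1 + int n*(s-1))*c"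
          "c*q + d * s = int n*r*b + (1 + int n*(s-1))*d" by (simp_all add: algebra_simps)
  qed
  have E1: "a*e + b*g = int n*(e*a + f*c)" using R(1) by (simp add: e_def g_def f_def algebra_simps)
  have E2: "a*f - b*e = int n*(e*b + f*d)" using R(2) s by (simp add: e_def g_def f_def algebra_simps)
  have E3: "c*e + d*g = int n*(g*a - e*c)" using R(3) s by (simp add: e_def g_def f_def algebra_simps)
  have E4: "c*f - d*e = int n*(g*b - e*d)" using R(4) s by (simp add: e_def g_def f_def algebra_simps)
  have n0: "int n \<noteq> 0" using n by simp
  have det1: "a*d - b*c = 1" using dA A by simp
  have tr2: "\<bar>a + d\<bar> > 2" using tA A by simp
  show ?thesis
  proof (rule ccontr)
    assume "B \<noteq> I2"
    hence ne: "(e,f,g) \<noteq> (0,0,0)" using s B by (auto simp: I2_def e_def f_def g_def)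
    show False
    proof (cases "(e,f) = (0,0)")
      case False
      have "int n * (e*(a*f - b*e) + f*(c*f - d*e)) = (a*e + b*g)*f - (a*f - b*e)*e"
        using E1 E2 by (simp add: algebra_simps) algebra
      also have "\<dots> = b*(e*e + f*g)" by (simp add: algebra_simps)
      finally have "e*(a*f - b*e) + f*(c*f - d*e) = 0" using efg n0 by simp
      hence "f * (c*f + d*(-e)) = (-e) * (a*f + b*(-e))" by (simp add: algebra_simps)
      thus False using no_rat_eig[OF det1 tr2, of f "-e"] False by auto
    next
      case True
      hence g0: "g \<noteq> 0" and e0: "e = 0" and f0: "f = 0" using ne by auto
      have "int n * g * b = 0" using E4 e0 f0 by (simp add: algebra_simps)
      hence "b = 0" using g0 n0 by simp
      hence "0 * (c*0 + d*1) = 1 * (a*0 + b*1)" by simp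
      thus False using no_rat_eig[OF det1 tr2, of 0 1] by auto
    qed
  qed
qed


fun mneg :: "imat \<Rightarrow> imat" where "mneg (a,b,c,d) = (-a,-b,-c,-d)"

lemma mneg_mmul: "mmul (mneg A) B = mneg (mmul A B)" "mmul A (mneg B) = mneg (mmul A B)"
  by (cases A; cases B; simp)+

lemma mneg_mneg[simp]: "mneg (mneg A) = A" by (cases A) simp

lemma mpow_mneg: "mpow (mneg B) k = (if even k then mpow B k else mneg (mpow B k))"
  by (induction k) (auto simp: mneg_mmul)

lemma mpow_two: "mpow B 2 = mmul B B" by (simp add: numeral_2_eq_2)
lemma mpow_three: "mpow B 3 = mmul B (mmul B B)" by (simp add: numeral_3_eq_3)

lemma fin_order:
  assumes dA: "det A = 1" and tA: "\<bar>tr A\<bar> > 2" and rel: "mmul A B = mmul (mpow B n) A"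
    and dB: "det B = 1 \<or> det B = -1" and n: "n \<ge> 2"
  shows "mpow B 12 = I2"
proof -
  have AA: "mmul A (adj A) = I2" using adj_right[of A] dA by (simp add: I2_def)
  have "mmul (mmul A B) (adj A) = mpow B n"
    by (simp add: rel mmul_assoc AA)
  hence trn: "tr (mpow B n) = tr B" using tr_conj[of A B] dA by simp
  define sq where "sq k = tr (mpow B k)" for k
  have s0: "sq 0 = 2" by (simp add: sq_def I2_def)
  have s1: "sq 1 = tr B" by (simp add: sq_def)
  have srec: "sq (Suc (Suc k)) = tr B * sq (Suc k) - det B * sq k" for k
    unfolding sq_def by (rule tr_rec)
  have "\<bar>sq n\<bar> = \<bar>sq 1\<bar>" using trn by (simp add: sq_def)
  hence nc: "\<not> (\<bar>tr B\<bar> \<ge> 3 \<or> (det B = -1 \<and> tr B \<noteq> 0))"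
    using seq_ne[OF s0 s1 srec dB _ n] by blast
  obtain p q r s where B: "B = (p,q,r,s)" by (cases B) auto
  have p12: "mpow B 12 = mpow (mpow B 2) 6" "mpow B 12 = mpow (mpow B 3) 4" "mpow B 12 = mpow (mpow B 4) 3"
    using mpow_mult[of B 2 6] mpow_mult[of B 3 4] mpow_mult[of B 4 3] by simp_all
  have p4: "mpow B 4 = mpow (mpow B 2) 2" using mpow_mult[of B 2 2] by simp
  have negI: "mpow (mneg I2) k = (if even k then I2 else mneg I2)" for k
    using mpow_mneg[of I2 k] by simp
  show ?thesis
  proof (cases "det B = -1")
    case True
    hence t0: "p + s = 0" "p * s - q*r = -1" using nc B by auto
    have "mpow B 2 = I2" unfolding mpow_two B using t0 by (simp add: I2_def) algebra
    thus ?thesis using p12 by simp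
  next
    case False
    hence d1: "p * s - q*r = 1" using dB B by auto
    have "\<bar>p + s\<bar> \<le> 2" using nc B by auto
    hence "p + s = 0 \<or> p + s = 1 \<or> p + s = -1 \<or> p + s = 2 \<or> p + s = -2" by auto
    moreover
    { assume t: "p + s = 0"
      have "mpow B 2 = mneg I2" unfolding mpow_two B using t d1 by (simp add: I2_def) algebra
      hence "mpow B 4 = I2" using p4 negI[of 2] by simp
      hence ?thesis using p12 by simp }
    moreover
    { assume t: "p + s = 1"
      have "mpow B 3 = mneg I2" unfolding mpow_three B using t d1 by (simp add: I2_def) algebra
      hence ?thesis using p12 negI[of 4] by simp }
    moreover
    { assume t: "p + s = -1"
      have "mpow B 3 = I2" unfolding mpow_three B using t d1 by (simp add: I2_def) algebra
      hence ?thesis using p12 by simp }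
    moreover
    { assume t: "p + s = 2"
      have "B = I2" by (rule parabolic[OF dA tA rel]) (use t d1 B n in auto)
      hence ?thesis by simp }
    moreover
    { assume t: "p + s = -2"
      have sk: "sq k = 2 * (-1)^k" for k
      proof (induction k rule: nat_less_induct)
        case (1 k)
        show ?case
        proof (cases k)
          case 0 thus ?thesis using s0 by simp
        next
          case (Suc j) note kj = this
          show ?thesis
          proof (cases j)
            case 0 thus ?thesis using s1 kj B t by simp
          next
            case (Suc i)
            have "sq k = tr B * sq (Suc i) - det B * sq i" using srec[of i] kj Suc by simp
            also have "\<dots> = (-2) * (2 * (-1)^(Suc i)) - 1 * (2 * (-1)^i)"
              using 1 kj Suc B t d1 by simp
            also have "\<dots> = 2 * (-1)^k" using kj Suc by simp
            finally show ?thesis .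
          qed
        qed
      qed
      have "sq n = sq 1" using trn by (simp add: sq_def)
      hence "(-1::int)^n = -1" using sk[of n] sk[of 1] by simp
      hence odd: "odd n" by (metis neg_one_even_power one_neq_neg_one)
      have rel': "mmul A (mneg B) = mmul (mpow (mneg B) n) A"
        using rel odd by (simp add: mpow_mneg mneg_mmul)
      have "mneg B = I2" by (rule parabolic[OF dA tA rel']) (use t d1 B n in auto)
      hence "B = mneg I2" by (metis mneg_mneg)
      hence ?thesis using negI[of 12] by simp }
    ultimately show ?thesis by blast
  qed
qed


fun iv :: "int \<times> int \<Rightarrow> v2" where "iv (i,j) = (of_int i, of_int j)"
fun imv :: "imat \<Rightarrow> int \<times> int \<Rightarrow> int \<times> int" where
  "imv (a,b,c,d) (i,j) = (a*i + b*j, c*i + d*j)"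

lemma mv_iv: "mv M (iv k) = iv (imv M k)"
  by (cases M; cases k) (simp add: mv_def)

lemma mv_mmul: "mv (mmul M N) x = mv M (mv N x)"
  by (cases M; cases N; cases x) (simp add: mv_def algebra_simps)

lemma mv_add: "mv M (x + y) = mv M x + mv M y"
  by (cases M; cases x; cases y) (simp add: mv_def algebra_simps)

lemma mv_diff: "mv M (x - y) = mv M x - mv M y"
  by (cases M; cases x; cases y) (simp add: mv_def algebra_simps)

lemma mv_I2[simp]: "mv I2 x = x"
  by (cases x) (simp add: mv_def I2_def)

lemma iv_add: "iv k + iv l = iv (fst k + fst l, snd k + snd l)"
  by (cases k; cases l) simp

lemma iv_diff: "iv k - iv l = iv (fst k - fst l, snd k - snd l)"
  by (cases k; cases l) simp

lemma iv_zero: "iv k = 0 \<longleftrightarrow> k = (0,0)"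
  by (cases k) (simp add: zero_prod_def)

lemma isZ2_iv: "isZ2 x \<longleftrightarrow> (\<exists>k. x = iv k)"
proof
  assume "isZ2 x"
  then obtain i j where "fst x = of_int i" "snd x = of_int j" unfolding isZ2_def by (auto elim!: Ints_cases)
  hence "x = iv (i,j)" by (simp add: prod_eq_iff)
  thus "\<exists>k. x = iv k" by blast
next
  assume "\<exists>k. x = iv k"
  then obtain i j where "x = iv (i,j)" by auto
  thus "isZ2 x" by (simp add: isZ2_def)
qed

lemma pp_add_iv: "pp (x + iv k) = pp x"
  unfolding pp_eq_iff isZ2_iv by (intro exI[of _ k]) simp

lemma int_const:
  fixes \<phi> :: "v2 \<Rightarrow> real"
  assumes "continuous_on UNIV \<phi>" "\<And>x. \<phi> x \<in> \<int>"
  shows "\<phi> x = \<phi> y"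
proof -
  have "\<phi> constant_on UNIV"
  proof (rule continuous_discrete_range_constant[OF connected_UNIV assms(1)])
    fix x :: v2
    show "\<exists>e>0. \<forall>y. y \<in> UNIV \<and> \<phi> y \<noteq> \<phi> x \<longrightarrow> e \<le> norm (\<phi> y - \<phi> x)"
    proof (intro exI[of _ 1] conjI allI impI)
      fix y assume "y \<in> UNIV \<and> \<phi> y \<noteq> \<phi> x"
      moreover have "\<phi> y - \<phi> x \<in> \<int>" using assms(2) by (simp add: Ints_diff)
      ultimately show "1 \<le> norm (\<phi> y - \<phi> x)" using Ints_nonzero_abs_ge1 by force
    qed simp
  qed
  then obtain c where "\<forall>z\<in>UNIV. \<phi> z = c" unfolding constant_on_def by blast
  thus ?thesis by (metis UNIV_I)
qed

lemma lift_unique: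
  fixes G1 G2 :: "v2 \<Rightarrow> v2"
  assumes "continuous_on UNIV G1" "continuous_on UNIV G2" "\<And>x. pp (G1 x) = pp (G2 x)"
  obtains k where "\<And>x. G1 x = G2 x + iv k"
proof -
  have z: "isZ2 (G1 x - G2 x)" for x using assms(3) pp_eq_iff by blast
  have c1: "continuous_on UNIV (\<lambda>x. fst (G1 x) - fst (G2 x))"
    by (intro continuous_intros continuous_on_fst assms(1,2))
  have c2: "continuous_on UNIV (\<lambda>x. snd (G1 x) - snd (G2 x))"
    by (intro continuous_intros continuous_on_snd assms(1,2))
  have e1: "fst (G1 x) - fst (G2 x) = fst (G1 0) - fst (G2 0)" for x
    by (rule int_const[OF c1]) (use z in \<open>auto simp: isZ2_def\<close>)
  have e2: "snd (G1 x) - snd (G2 x) = snd (G1 0) - snd (G2 0)" for x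
    by (rule int_const[OF c2]) (use z in \<open>auto simp: isZ2_def\<close>)
  obtain k where k: "G1 0 - G2 0 = iv k" using z[of 0] isZ2_iv by blast
  have "G1 x = G2 x + iv k" for x
  proof -
    obtain i j where kk: "k = (i,j)" by (cases k) auto
    show ?thesis using e1[of x] e2[of x] k by (simp add: kk prod_eq_iff algebra_simps)
  qed
  thus ?thesis using that by blast
qed

lemma transl_int:
  fixes T :: "v2 \<Rightarrow> v2"
  assumes "\<And>x. T (x + a) = T x + b"
  shows "T (x + of_int i *\<^sub>R a) = T x + of_int i *\<^sub>R b"
proof -
  have pos: "T (x + real m *\<^sub>R a) = T x + real m *\<^sub>R b" for m x
  proof (induction m arbitrary: x)
    case (Suc m)
    have "T (x + real (Suc m) *\<^sub>R a) = T ((x + real m *\<^sub>R a) + a)" by (simp add: algebra_simps)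
    also have "\<dots> = T (x + real m *\<^sub>R a) + b" by (rule assms)
    also have "\<dots> = T x + real (Suc m) *\<^sub>R b" using Suc by (simp add: algebra_simps)
    finally show ?case .
  qed simp
  have neg: "T (x - a) = T x - b" for x using assms[of "x - a"] by simp
  have negm: "T (x - real m *\<^sub>R a) = T x - real m *\<^sub>R b" for m x
  proof (induction m arbitrary: x)
    case (Suc m)
    have "T (x - real (Suc m) *\<^sub>R a) = T ((x - real m *\<^sub>R a) - a)" by (simp add: algebra_simps)
    also have "\<dots> = T (x - real m *\<^sub>R a) - b" by (rule neg)
    also have "\<dots> = T x - real (Suc m) *\<^sub>R b" using Suc by (simp add: algebra_simps)
    finally show ?case .
  qed simp
  show ?thesis
  proof (cases "i \<ge> 0")
    case True
    then obtain m where "i = int m" by (metis nonneg_eq_int)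
    thus ?thesis using pos by simp
  next
    case False
    then obtain m where "i = - int m" by (metis neg_0_le_iff_le nonneg_eq_int le_cases minus_minus)
    thus ?thesis using negm[of x m] by simp
  qed
qed

lemma lift_matrix:
  assumes "continuous_on UNIV F" "\<And>x. pp (F x) = f (pp x)"
  obtains B where "\<And>x k. F (x + iv k) = F x + mv B (iv k)"
proof -
  have "\<exists>d. \<forall>x. F (x + iv k) = F x + iv d" for k
  proof -
    have c: "continuous_on UNIV (\<lambda>x. F (x + iv k))"
      by (rule continuous_on_compose2[OF assms(1)]) (auto intro!: continuous_intros)
    show ?thesis by (rule lift_unique[OF c assms(1)]) (auto simp: assms(2) pp_add_iv)
  qed
  then obtain \<Delta> where D: "\<And>k x. F (x + iv k) = F x + iv (\<Delta> k)" by metis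
  obtain p r where e1: "\<Delta> (1,0) = (p,r)" by (cases "\<Delta> (1,0)") auto
  obtain q s where e2: "\<Delta> (0,1) = (q,s)" by (cases "\<Delta> (0,1)") auto
  have "F (x + iv k) = F x + mv (p,q,r,s) (iv k)" for x k
  proof -
    obtain i j where k: "k = (i,j)" by (cases k) auto
    have t1: "F (y + of_int i *\<^sub>R iv (1,0)) = F y + of_int i *\<^sub>R iv (\<Delta> (1,0))" for y
      by (rule transl_int) (rule D)
    have t2: "F (y + of_int j *\<^sub>R iv (0,1)) = F y + of_int j *\<^sub>R iv (\<Delta> (0,1))" for y
      by (rule transl_int) (rule D)
    have eqk: "x + iv k = (x + of_int i *\<^sub>R iv (1,0)) + of_int j *\<^sub>R iv (0,1)"
      by (simp add: k prod_eq_iff)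
    have "F (x + iv k) = F (x + of_int i *\<^sub>R iv (1,0)) + of_int j *\<^sub>R iv (\<Delta> (0,1))"
      unfolding eqk by (rule t2)
    also have "\<dots> = F x + of_int i *\<^sub>R iv (\<Delta> (1,0)) + of_int j *\<^sub>R iv (\<Delta> (0,1))"
      unfolding t1 ..
    also have "\<dots> = F x + (of_int i *\<^sub>R iv (p,r) + of_int j *\<^sub>R iv (q,s))" using e1 e2 by (simp add: add.assoc)
    also have "\<dots> = F x + mv (p,q,r,s) (iv k)" by (simp add: k mv_def algebra_simps)
    finally show ?thesis .
  qed
  thus ?thesis using that by blast
qed


lemma eig_char:
  fixes a b c d :: int and l v1 v2 :: real
  assumes "(v1, v2) \<noteq> (0, 0)" "of_int a * v1 + of_int b * v2 = l * v1"
    "of_int c * v1 + of_int d * v2 = l * v2" "a*d - b*c = 1"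
  shows "l^2 - of_int (a+d) * l + 1 = 0"
proof -
  have dt: "real_of_int a * real_of_int d - real_of_int b * real_of_int c = 1"
    using assms(4) by (metis of_int_1 of_int_diff of_int_mult)
  have "(l^2 - of_int (a+d) * l + 1) * v1 = (d - l) * (of_int a * v1 + of_int b * v2 - l * v1) - of_int b * (of_int c * v1 + of_int d * v2 - l * v2)"
    using dt by (simp add: algebra_simps power2_eq_square; algebra?)
  hence 1: "(l^2 - of_int (a+d) * l + 1) * v1 = 0" using assms(2,3) by simp
  have "(l^2 - of_int (a+d) * l + 1) * v2 = (a - l) * (of_int c * v1 + of_int d * v2 - l * v2) - of_int c * (of_int a * v1 + of_int b * v2 - l * v1)"
    using dt by (simp add: algebra_simps power2_eq_square; algebra?)
  hence 2: "(l^2 - of_int (a+d) * l + 1) * v2 = 0" using assms(2,3) by simp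
  show ?thesis using 1 2 assms(1) by auto
qed

locale hyp =
  fixes a b c d :: int and lam :: real and n :: nat
  assumes det1: "a*d - b*c = 1" and tr2: "\<bar>a + d\<bar> > 2"
    and char: "lam^2 - of_int (a+d) * lam + 1 = 0" and lamn: "lam > real n" and n2: "n \<ge> 2"
begin

definition "A = (a,b,c,d)"
definition "A' = (d,-b,-c,a)"
definition "mu = of_int (a+d) - lam"
definition uf :: "v2 \<Rightarrow> real" where "uf x = (lam - of_int d) * fst x + of_int b * snd x"
definition sf :: "v2 \<Rightarrow> real" where "sf x = (mu - of_int d) * fst x + of_int b * snd x"

lemma dt: "real_of_int a * real_of_int d - real_of_int b * real_of_int c = 1"
  using det1 by (metis of_int_1 of_int_diff of_int_mult)

lemma AA': "mmul A A' = I2" "mmul A' A = I2"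
  using det1 by (simp_all add: A_def A'_def I2_def algebra_simps)

lemma mvAA'[simp]: "mv A (mv A' x) = x" "mv A' (mv A x) = x"
  by (simp_all add: mv_mmul[symmetric] AA')

lemma b0: "b \<noteq> 0"
  using det1 tr2 ad1[of a d] by auto

lemma lam_pos: "lam > 2" using lamn n2 by linarith

lemma mu_char: "mu^2 - of_int (a+d) * mu + 1 = 0"
  using char unfolding mu_def by (simp add: algebra_simps power2_eq_square)

lemma lam_mu: "lam * mu = 1"
  using char unfolding mu_def by (simp add: algebra_simps power2_eq_square)

lemma mu_pos: "mu > 0" and mu_lt: "mu < 1"
proof -
  have "mu = 1 / lam" using lam_mu lam_pos by (simp add: field_simps)
  thus "mu > 0" "mu < 1" using lam_pos by auto
qed

lemma uf_A: "uf (mv A x) = lam * uf x"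
proof -
  have "lam * lam = of_int (a+d) * lam - 1" using char by (simp add: power2_eq_square algebra_simps)
  thus ?thesis unfolding uf_def mv_def A_def using dt
    by (simp add: algebra_simps; algebra?)
qed

lemma sf_A: "sf (mv A x) = mu * sf x"
proof -
  have "mu * mu = of_int (a+d) * mu - 1" using mu_char by (simp add: power2_eq_square algebra_simps)
  thus ?thesis unfolding sf_def mv_def A_def using dt
    by (simp add: algebra_simps; algebra?)
qed

lemma uf_add: "uf (x + y) = uf x + uf y" and uf_diff: "uf (x - y) = uf x - uf y"
  and uf_scale: "uf (r *\<^sub>R x) = r * uf x"
  and sf_add: "sf (x + y) = sf x + sf y" and sf_diff: "sf (x - y) = sf x - sf y"
  and sf_scale: "sf (r *\<^sub>R x) = r * sf x"
  by (simp_all add: uf_def sf_def algebra_simps)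

lemma uf_sf_zero: assumes "uf x = 0" "sf x = 0" shows "x = 0"
proof -
  have "lam \<noteq> mu" using lam_pos mu_lt by simp
  have "(lam - mu) * fst x = uf x - sf x" by (simp add: uf_def sf_def algebra_simps)
  hence "fst x = 0" using assms \<open>lam \<noteq> mu\<close> by simp
  hence "of_int b * snd x = 0" using assms(1) by (simp add: uf_def)
  hence "snd x = 0" using b0 by simp
  thus ?thesis using \<open>fst x = 0\<close> by (simp add: prod_eq_iff)
qed

definition "ee0 = (real_of_int b, - (lam - of_int d))"
definition "ee = (1 / (of_int b * (mu - lam))) *\<^sub>R ee0"

lemma uf_ee: "uf ee = 0" and sf_ee: "sf ee = 1"
proof -
  have "mu \<noteq> lam" using lam_pos mu_lt by simp
  have "uf ee0 = 0" by (simp add: uf_def ee0_def algebra_simps)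
  thus "uf ee = 0" by (simp add: ee_def uf_scale)
  have "sf ee0 = of_int b * (mu - lam)" by (simp add: sf_def ee0_def algebra_simps)
  thus "sf ee = 1" using b0 \<open>mu \<noteq> lam\<close> by (simp add: ee_def sf_scale)
qed

lemma ee_nz: "ee \<noteq> 0" using sf_ee by (auto simp: sf_def)

lemma u0_decomp: assumes "uf z = 0" shows "z = sf z *\<^sub>R ee"
proof -
  have "uf (z - sf z *\<^sub>R ee) = 0" "sf (z - sf z *\<^sub>R ee) = 0"
    using assms by (simp_all add: uf_diff sf_diff uf_scale sf_scale uf_ee sf_ee)
  thus ?thesis using uf_sf_zero by fastforce
qed

lemma uf_int: assumes "uf (iv k) = 0" shows "k = (0,0)"
proof -
  obtain i j where k: "k = (i,j)" by (cases k) auto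
  have e: "(lam - of_int d) * of_int i + of_int b * of_int j = 0" using assms by (simp add: uf_def k)
  have i0: "i = 0"
  proof (rule ccontr)
    assume i: "i \<noteq> 0"
    define P where "P = d*i - b*j"
    have "real_of_int P = lam * of_int i" using e by (simp add: P_def algebra_simps)
    hence "real_of_int (P^2 - (a+d)*P*i + i^2) = of_int i ^ 2 * (lam^2 - of_int (a+d) * lam + 1)"
      by (simp add: algebra_simps power2_eq_square)
    also have "\<dots> = 0" using char by simp
    finally have "P^2 - (a+d)*P*i + i^2 = 0" by linarith
    thus False using quad_no_sol[OF _ tr2] i by blast
  qed
  hence "of_int b * of_int j = (0::real)" using e by simp
  hence "j = 0" using b0 by simp
  thus ?thesis using i0 k by simp
qed

lemma n_not_eig: "int n ^ 2 - (a+d) * int n + 1 \<noteq> 0"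
  using quad_no_sol[OF _ tr2, of "int n" 1] by auto

end

lemma periodic_bounded:
  fixes \<phi> :: "v2 \<Rightarrow> real"
  assumes "continuous_on UNIV \<phi>" "\<And>x k. \<phi> (x + iv k) = \<phi> x"
  obtains M where "\<And>x. \<bar>\<phi> x\<bar> \<le> M"
proof -
  have "compact ({0..1::real} \<times> {0..1::real})" by (intro compact_Times) (simp_all add: compact_Icc)
  hence "compact (\<phi> ` ({0..1} \<times> {0..1}))"
    using compact_continuous_image continuous_on_subset[OF assms(1)] by blast
  then obtain M where M: "\<And>y. y \<in> \<phi> ` ({0..1} \<times> {0..1}) \<Longrightarrow> norm y \<le> M"
    using compact_imp_bounded bounded_iff by metis
  have "\<bar>\<phi> x\<bar> \<le> M" for x
  proof -
    define k where "k = (\<lfloor>fst x\<rfloor>, \<lfloor>snd x\<rfloor>)"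
    have "x - iv k \<in> {0..1} \<times> {0..1}" unfolding k_def
      by (auto simp: mem_Times_iff) (linarith+)
    moreover have "\<phi> x = \<phi> (x - iv k)" using assms(2)[of "x - iv k" k] by simp
    ultimately show ?thesis using M by auto
  qed
  thus ?thesis using that by blast
qed

lemma conj_pow:
  assumes "\<And>x. P (Q x) = x" "\<And>x. Q (P x) = x"
  shows "P ((\<Phi> ^^ j) (Q x)) = ((\<lambda>y. P (\<Phi> (Q y))) ^^ j) x"
proof (induction j arbitrary: x)
  case 0 thus ?case using assms by simp
next
  case (Suc j)
  have "P ((\<Phi> ^^ Suc j) (Q x)) = P (\<Phi> (Q (P ((\<Phi> ^^ j) (Q x)))))"
    by (simp add: assms(2))
  also have "\<dots> = ((\<lambda>y. P (\<Phi> (Q y))) ^^ Suc j) x" using Suc by simp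
  finally show ?case .
qed

lemma comm_pow:
  fixes \<Phi> :: "v2 \<Rightarrow> v2"
  assumes "\<And>x. \<Phi> (x + t) = \<Phi> x + t"
  shows "(\<Phi> ^^ j) (x + t) = (\<Phi> ^^ j) x + t"
  by (induction j) (simp_all add: assms)

lemma shift_pow:
  fixes \<Phi> :: "v2 \<Rightarrow> v2"
  assumes "\<And>x. \<Phi> (x + t) = \<Phi> x + t"
  shows "((\<lambda>y. \<Phi> y + t) ^^ j) x = (\<Phi> ^^ j) x + real j *\<^sub>R t"
proof (induction j)
  case (Suc j)
  have "((\<lambda>y. \<Phi> y + t) ^^ Suc j) x = \<Phi> ((\<Phi> ^^ j) x + real j *\<^sub>R t) + t" using Suc by simp
  also have "\<Phi> ((\<Phi> ^^ j) x + real j *\<^sub>R t) = \<Phi> ((\<Phi> ^^ j) x) + real j *\<^sub>R t"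
  proof -
    have "\<Phi> (y + real m *\<^sub>R t) = \<Phi> y + real m *\<^sub>R t" for m y
    proof (induction m arbitrary: y)
      case (Suc m)
      have "\<Phi> (y + real (Suc m) *\<^sub>R t) = \<Phi> ((y + real m *\<^sub>R t) + t)" by (simp add: algebra_simps)
      also have "\<dots> = \<Phi> y + real m *\<^sub>R t + t" using Suc assms by simp
      finally show ?case by (simp add: algebra_simps)
    qed simp
    thus ?thesis .
  qed
  finally show ?case by (simp add: algebra_simps)
qed simp


lemma one_dim_pos:
  fixes \<phi> :: "real \<Rightarrow> real"
  assumes cont: "continuous_on UNIV \<phi>" and inj: "inj \<phi>" and bd: "\<And>r. \<bar>\<phi> r - r\<bar> \<le> M"
    and pos: "\<phi> 0 > 0"
  shows "(\<phi> ^^ Suc j) 0 \<ge> \<phi> 0"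
proof -
  have mono0: "\<phi> r \<ge> \<phi> 0" if r: "r \<ge> 0" for r
  proof (rule ccontr)
    assume lt: "\<not> \<phi> r \<ge> \<phi> 0"
    define R where "R = r + \<bar>\<phi> 0\<bar> + \<bar>M\<bar> + 1"
    have "\<phi> R \<ge> R - M" using bd[of R] by linarith
    hence fR: "\<phi> R \<ge> \<phi> 0" unfolding R_def using r abs_ge_self[of "\<phi> 0"] abs_ge_self[of M] by linarith
    have "r \<le> R" unfolding R_def by simp
    then obtain \<xi> where \<xi>: "r \<le> \<xi>" "\<xi> \<le> R" "\<phi> \<xi> = \<phi> 0"
      using IVT'[of \<phi> r "\<phi> 0" R] lt fR continuous_on_subset[OF cont] by force
    hence "\<xi> = 0" using inj by (auto dest: injD)
    hence "r = 0" using \<xi>(1) r by simp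
    thus False using lt by simp
  qed
  show ?thesis
  proof (induction j)
    case (Suc j)
    have "(\<phi> ^^ Suc (Suc j)) 0 = \<phi> ((\<phi> ^^ Suc j) 0)" by simp
    also have "\<dots> \<ge> \<phi> 0" using Suc pos by (intro mono0) simp
    finally show ?case .
  qed simp
qed

lemma one_dim:
  fixes \<phi> :: "real \<Rightarrow> real"
  assumes cont: "continuous_on UNIV \<phi>" and inj: "inj \<phi>" and bd: "\<And>r. \<bar>\<phi> r - r\<bar> \<le> M"
    and nz: "\<phi> 0 \<noteq> 0"
  shows "\<bar>(\<phi> ^^ Suc j) 0\<bar> \<ge> \<bar>\<phi> 0\<bar>"
proof (cases "\<phi> 0 > 0")
  case True thus ?thesis using one_dim_pos[OF assms(1-3) True, of j] by simp
next
  case False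
  hence neg: "\<phi> 0 < 0" using nz by simp
  define \<psi> where "\<psi> r = - \<phi> (- r)" for r
  have c: "continuous_on UNIV \<psi>" unfolding \<psi>_def
    by (intro continuous_intros continuous_on_compose2[OF cont]) auto
  have i: "inj \<psi>" using inj unfolding \<psi>_def inj_def by force
  have b: "\<bar>\<psi> r - r\<bar> \<le> M" for r using bd[of "-r"] unfolding \<psi>_def by simp
  have p: "\<psi> 0 > 0" using neg by (simp add: \<psi>_def)
  have it: "(\<psi> ^^ k) 0 = - (\<phi> ^^ k) 0" for k
    by (induction k) (simp_all add: \<psi>_def)
  have "(\<psi> ^^ Suc j) 0 \<ge> \<psi> 0" by (rule one_dim_pos[OF c i b p])
  hence "- (\<phi> ^^ Suc j) 0 \<ge> - \<phi> 0" unfolding it by (simp add: \<psi>_def)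
  thus ?thesis using neg by linarith
qed

lemma cont_pow:
  fixes G :: "v2 \<Rightarrow> v2"
  assumes "continuous_on UNIV G"
  shows "continuous_on UNIV (G ^^ j)"
proof (induction j)
  case (Suc j)
  have "continuous_on UNIV (\<lambda>x. G ((G ^^ j) x))"
    by (rule continuous_on_compose2[OF assms Suc]) simp
  thus ?case by (simp add: o_def)
qed (simp add: continuous_on_id)


context hyp begin

lemma cont_uf: "continuous_on UNIV (\<lambda>x. uf (F x))" if "continuous_on UNIV F" for F :: "v2 \<Rightarrow> v2"
  unfolding uf_def by (intro continuous_intros continuous_on_fst continuous_on_snd that)

lemma cont_sf: "continuous_on UNIV (\<lambda>x. sf (F x))" if "continuous_on UNIV F" for F :: "v2 \<Rightarrow> v2"
  unfolding sf_def by (intro continuous_intros continuous_on_fst continuous_on_snd that)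

lemma disp_sum:
  fixes G :: "v2 \<Rightarrow> v2"
  shows "uf ((G ^^ j) x - x) = (\<Sum>i<j. uf (G ((G ^^ i) x) - (G ^^ i) x))"
proof (induction j)
  case (Suc j)
  have "(G ^^ Suc j) x - x = (G ((G ^^ j) x) - (G ^^ j) x) + ((G ^^ j) x - x)" by simp
  hence "uf ((G ^^ Suc j) x - x) = uf (G ((G ^^ j) x) - (G ^^ j) x) + uf ((G ^^ j) x - x)"
    by (simp only: uf_add)
  thus ?case using Suc by simp
qed (simp add: uf_def)

lemma uf_A_disp: "uf (mv A y - mv A z) = lam * uf (y - z)"
  by (simp add: mv_diff[symmetric] uf_A)

lemma sf_A_disp: "sf (mv A y - mv A z) = mu * sf (y - z)"
  by (simp add: mv_diff[symmetric] sf_A)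

lemma uf_const:
  fixes G :: "v2 \<Rightarrow> v2"
  assumes cont: "continuous_on UNIV G" and per: "\<And>x k. G (x + iv k) = G x + iv k"
    and rel: "\<And>x. mv A (G (mv A' x)) = (G ^^ n) x + iv v"
  shows "\<exists>cc. \<forall>x. uf (G x - x) = cc"
proof -
  define \<phi> where "\<phi> x = uf (G x - x)" for x
  have c: "continuous_on UNIV \<phi>" unfolding \<phi>_def
    by (rule cont_uf) (intro continuous_intros cont)
  have p: "\<phi> (x + iv k) = \<phi> x" for x k unfolding \<phi>_def by (simp add: per)
  obtain M where M: "\<And>x. \<bar>\<phi> x\<bar> \<le> M" using periodic_bounded[OF c p] by blast
  have key: "lam * \<phi> (mv A' x) = uf ((G ^^ n) x - x) + uf (iv v)" for x
  proof -
    have "lam * \<phi> (mv A' x) = uf (mv A (G (mv A' x)) - mv A (mv A' x))"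
      unfolding \<phi>_def uf_A_disp ..
    also have "\<dots> = uf ((G ^^ n) x + iv v - x)" by (simp add: rel)
    also have "\<dots> = uf ((G ^^ n) x - x) + uf (iv v)" by (simp add: uf_add[symmetric] algebra_simps)
    finally show ?thesis .
  qed
  define S where "S = {\<phi> x - \<phi> y | x y. True}"
  have bdd: "bdd_above S" unfolding S_def
  proof (rule bdd_aboveI[of _ "2*M"])
    fix e assume "e \<in> {\<phi> x - \<phi> y |x y. True}"
    then obtain x y where "e = \<phi> x - \<phi> y" by blast
    thus "e \<le> 2*M" using M[of x] M[of y] by (simp add: abs_le_iff)
  qed
  have ne: "S \<noteq> {}" unfolding S_def by blast
  define \<Delta> where "\<Delta> = Sup S"
  have up: "\<phi> x - \<phi> y \<le> \<Delta>" for x y unfolding \<Delta>_def by (rule cSup_upper[OF _ bdd]) (unfold S_def, blast)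
  have le: "lam * (\<phi> x - \<phi> y) \<le> real n * \<Delta>" for x y
  proof -
    have "lam * (\<phi> x - \<phi> y) = lam * \<phi> (mv A' (mv A x)) - lam * \<phi> (mv A' (mv A y))"
      by (simp add: algebra_simps)
    also have "\<dots> = uf ((G ^^ n) (mv A x) - mv A x) - uf ((G ^^ n) (mv A y) - mv A y)"
      unfolding key by simp
    also have "\<dots> = (\<Sum>i<n. \<phi> ((G ^^ i) (mv A x)) - \<phi> ((G ^^ i) (mv A y)))"
      unfolding disp_sum \<phi>_def by (simp add: sum_subtractf)
    also have "\<dots> \<le> (\<Sum>i<n. \<Delta>)" by (rule sum_mono) (rule up)
    also have "\<dots> = real n * \<Delta>" by simp
    finally show ?thesis .
  qed
  have "\<Delta> \<le> real n * \<Delta> / lam"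
    unfolding \<Delta>_def[of] 
  proof (rule cSup_least[OF ne])
    fix e assume "e \<in> S"
    then obtain x y where e: "e = \<phi> x - \<phi> y" unfolding S_def by blast
    show "e \<le> real n * Sup S / lam" using le[of x y] lam_pos unfolding e \<Delta>_def
      by (simp add: field_simps)
  qed
  hence "lam * \<Delta> \<le> real n * \<Delta>" using lam_pos by (simp add: field_simps)
  hence "(lam - real n) * \<Delta> \<le> 0" by (simp add: algebra_simps)
  hence D0: "\<Delta> \<le> 0" using lamn by (simp add: mult_le_0_iff)
  have "\<phi> x = \<phi> 0" for x using up[of x 0] up[of 0 x] D0 by linarith
  thus ?thesis unfolding \<phi>_def by blast
qed

end


context hyp begin

lemma lift_main:
  fixes G :: "v2 \<Rightarrow> v2" and v :: "int \<times> int"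
  assumes cont: "continuous_on UNIV G" and per: "\<And>x k. G (x + iv k) = G x + iv k"
    and inj: "inj G"
    and rel: "\<And>x. mv A (G (mv A' x)) = (G ^^ n) x + iv v"
  shows "\<exists>q>0. \<exists>W. \<forall>x. (G ^^ q) x = x + iv W"
proof -
  obtain cc where cc: "\<And>x. uf (G x - x) = cc" using uf_const[OF cont per rel] by blast
  have ufj: "uf ((G ^^ j) x - x) = real j * cc" for j x
    unfolding disp_sum cc by simp
  have ufv: "uf (iv v) = (lam - real n) * cc"
  proof -
    have "lam * cc = uf (mv A (G (mv A' 0)) - mv A (mv A' 0))"
      unfolding uf_A_disp cc ..
    also have "\<dots> = uf ((G ^^ n) 0 + iv v - 0)" by (simp add: rel)
    also have "\<dots> = uf ((G ^^ n) 0 - 0) + uf (iv v)" by (simp add: uf_add[symmetric] algebra_simps)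
    finally show ?thesis unfolding ufj by (simp add: algebra_simps)
  qed
  obtain v1 v2 where v: "v = (v1, v2)" by (cases v) auto
  define N where "N = int n"
  define \<delta> where "\<delta> = N^2 - (a+d)*N + 1"
  have \<delta>0: "\<delta> \<noteq> 0" using n_not_eig by (simp add: \<delta>_def N_def)
  define \<sigma> where "\<sigma> = sgn \<delta>"
  have \<sigma>\<delta>: "\<sigma> * \<delta> = \<bar>\<delta>\<bar>" by (simp add: \<sigma>_def abs_sgn)
  define W1 where "W1 = \<sigma> * ((d - N)* v1 - b* v2)"
  define W2 where "W2 = \<sigma> * (- c* v1 + (a - N)* v2)"
  define q where "q = nat \<bar>\<delta>\<bar>"
  have q0: "q > 0" using \<delta>0 by (simp add: q_def)
  have qd: "int q = \<bar>\<delta>\<bar>" by (simp add: q_def)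
  have I1: "a*W1 + b*W2 - N*W1 = int q * v1"
  proof -
    have "a*W1 + b*W2 - N*W1 = \<sigma> * (((a-N)*(d-N) - b*c) * v1)"
      by (simp add: W1_def W2_def algebra_simps)
    also have "(a-N)*(d-N) - b*c = \<delta>" using det1 by (simp add: \<delta>_def algebra_simps power2_eq_square)
    finally show ?thesis using \<sigma>\<delta> qd by (simp add: mult.assoc[symmetric])
  qed
  have I2: "c*W1 + d*W2 - N*W2 = int q * v2"
  proof -
    have "c*W1 + d*W2 - N*W2 = \<sigma> * (((a-N)*(d-N) - b*c) * v2)"
      by (simp add: W1_def W2_def algebra_simps)
    also have "(a-N)*(d-N) - b*c = \<delta>" using det1 by (simp add: \<delta>_def algebra_simps power2_eq_square)
    finally show ?thesis using \<sigma>\<delta> qd by (simp add: mult.assoc[symmetric])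
  qed
  define W where "W = (W1, W2)"
  have PW: "mv A (iv W) - real n *\<^sub>R iv W = real q *\<^sub>R iv v"
  proof -
    have "real_of_int (a*W1 + b*W2 - N*W1) = real_of_int (int q * v1)" using I1 by simp
    moreover have "real_of_int (c*W1 + d*W2 - N*W2) = real_of_int (int q * v2)" using I2 by simp
    ultimately show ?thesis by (simp add: A_def W_def v mv_def N_def prod_eq_iff)
  qed
  have ufW: "uf (iv W) = real q * cc"
  proof -
    have "uf (mv A (iv W) - real n *\<^sub>R iv W) = (lam - real n) * uf (iv W)"
      by (simp add: uf_diff uf_scale uf_A algebra_simps)
    hence "(lam - real n) * uf (iv W) = uf (real q *\<^sub>R iv v)" by (simp only: PW)
    also have "\<dots> = (lam - real n) * (real q * cc)" by (simp add: uf_scale ufv)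
    finally have "(lam - real n) * uf (iv W) = (lam - real n) * (real q * cc)" .
    moreover have "lam - real n \<noteq> 0" using lamn by simp
    ultimately show ?thesis by (metis mult_cancel_left)
  qed
  define mW where "mW = (- W1, - W2)"
  have ivmW: "iv mW = - iv W" by (simp add: mW_def W_def)
  define H where "H x = (G ^^ q) x + iv mW" for x
  have perq: "(G ^^ j) (x + iv k) = (G ^^ j) x + iv k" for j x k by (rule comm_pow) (rule per)
  have perH: "H (x + iv k) = H x + iv k" for x k unfolding H_def perq by simp
  have contH: "continuous_on UNIV H" unfolding H_def
    by (intro continuous_intros cont_pow[OF cont])
  have injH: "inj H"
  proof -
    have "inj (G ^^ q)" using inj by simp
    thus ?thesis unfolding H_def inj_def by simp
  qed
  have ufH: "uf (H x - x) = 0" for x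
  proof -
    have "H x - x = ((G ^^ q) x - x) + iv mW" by (simp add: H_def)
    hence "uf (H x - x) = uf ((G ^^ q) x - x) + uf (iv mW)" by (simp only: uf_add)
    thus ?thesis using ufj ufW by (simp add: ivmW uf_def)
  qed
  have CG: "(\<lambda>y. mv A (G (mv A' y))) = (\<lambda>y. (G ^^ n) y + iv v)" using rel by (simp add: fun_eq_iff)
  have relH: "mv A (H (mv A' x)) = (H ^^ n) x" for x
  proof -
    have "mv A (H (mv A' x)) = mv A ((G ^^ q) (mv A' x)) + mv A (iv mW)"
      by (simp add: H_def mv_add)
    also have "mv A ((G ^^ q) (mv A' x)) = ((\<lambda>y. mv A (G (mv A' y))) ^^ q) x"
      by (rule conj_pow) simp_all
    also have "\<dots> = ((G ^^ n) ^^ q) x + real q *\<^sub>R iv v"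
      unfolding CG by (rule shift_pow) (rule perq)
    also have "mv A (iv mW) = - mv A (iv W)" unfolding ivmW
      by (simp add: A_def mv_def)
    finally have 1: "mv A (H (mv A' x)) = (G ^^ (n * q)) x + (real q *\<^sub>R iv v - mv A (iv W))"
      by (simp add: funpow_mult)
    have "(H ^^ n) x = ((G ^^ q) ^^ n) x + real n *\<^sub>R iv mW"
      unfolding H_def[abs_def] by (rule shift_pow) (rule perq)
    hence 2: "(H ^^ n) x = (G ^^ (n * q)) x + - (real n *\<^sub>R iv W)"
      by (simp add: funpow_mult ivmW mult.commute)
    have "real q *\<^sub>R iv v - mv A (iv W) = - (real n *\<^sub>R iv W)" using PW by (simp add: algebra_simps)
    thus ?thesis using 1 2 by simp
  qed
  have cs: "continuous_on UNIV (\<lambda>x. sf (H x - x))"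
    by (rule cont_sf) (intro continuous_intros contH)
  obtain Ms where Ms: "\<And>x. \<bar>sf (H x - x)\<bar> \<le> Ms"
    using periodic_bounded[OF cs] perH by (metis add_diff_cancel_right)
  have CH: "(\<lambda>y. mv A (H (mv A' y))) = H ^^ n" using relH by (simp add: fun_eq_iff)
  have Km: "\<bar>sf ((H ^^ (n ^ m)) x - x)\<bar> \<le> mu ^ m * Ms" for m x
  proof (induction m arbitrary: x)
    case 0 thus ?case using Ms by simp
  next
    case (Suc m)
    have "mv A ((H ^^ (n ^ m)) (mv A' x)) = ((\<lambda>y. mv A (H (mv A' y))) ^^ (n ^ m)) x"
      by (rule conj_pow) simp_all
    also have "\<dots> = (H ^^ (n ^ Suc m)) x" unfolding CH by (simp add: funpow_mult)
    finally have e: "(H ^^ (n ^ Suc m)) x - x = mv A ((H ^^ (n ^ m)) (mv A' x)) - mv A (mv A' x)" by simp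
    have "\<bar>sf ((H ^^ (n ^ Suc m)) x - x)\<bar> = mu * \<bar>sf ((H ^^ (n ^ m)) (mv A' x) - mv A' x)\<bar>"
      unfolding e sf_A_disp using mu_pos by (simp add: abs_mult)
    also have "\<dots> \<le> mu * (mu ^ m * Ms)" using Suc mu_pos by (intro mult_left_mono) auto
    finally show ?case by simp
  qed
  have Hid: "H x = x" for x
  proof (rule ccontr)
    fix x0 assume hx: "H x0 \<noteq> x0"
    define \<phi> where "\<phi> r = sf (H (x0 + r *\<^sub>R ee) - x0)" for r
    have dec: "H (x0 + r *\<^sub>R ee) = x0 + \<phi> r *\<^sub>R ee" for r
    proof -
      define z where "z = H (x0 + r *\<^sub>R ee) - x0"
      have "uf z = uf (H (x0 + r *\<^sub>R ee) - (x0 + r *\<^sub>R ee)) + uf (r *\<^sub>R ee)"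
        by (simp add: z_def uf_add[symmetric])
      hence "uf z = 0" using ufH by (simp add: uf_scale uf_ee)
      hence "z = sf z *\<^sub>R ee" by (rule u0_decomp)
      thus ?thesis by (simp add: z_def \<phi>_def algebra_simps)
    qed
    have itr: "(H ^^ j) x0 = x0 + (\<phi> ^^ j) 0 *\<^sub>R ee" for j
      by (induction j) (simp_all add: dec[symmetric])
    have c\<phi>: "continuous_on UNIV \<phi>"
    proof -
      have "continuous_on UNIV (\<lambda>r. H (x0 + r *\<^sub>R ee))"
        by (rule continuous_on_compose2[OF contH]) (auto intro!: continuous_intros)
      thus ?thesis unfolding \<phi>_def sf_def
        by (intro continuous_intros continuous_on_fst continuous_on_snd)
    qed
    have i\<phi>: "inj \<phi>"
    proof (rule injI)
      fix r r' assume "\<phi> r = \<phi> r'"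
      hence "H (x0 + r *\<^sub>R ee) = H (x0 + r' *\<^sub>R ee)" by (simp add: dec)
      hence "x0 + r *\<^sub>R ee = x0 + r' *\<^sub>R ee" using injH by (metis injD)
      thus "r = r'" using ee_nz by simp
    qed
    have b\<phi>: "\<bar>\<phi> r - r\<bar> \<le> Ms" for r
    proof -
      have "\<phi> r - r = sf (H (x0 + r *\<^sub>R ee) - (x0 + r *\<^sub>R ee))"
        unfolding \<phi>_def by (simp add: sf_diff sf_add sf_scale sf_ee)
      thus ?thesis using Ms by simp
    qed
    have nz: "\<phi> 0 \<noteq> 0"
    proof
      assume "\<phi> 0 = 0"
      hence "sf (H x0 - x0) = 0" by (simp add: \<phi>_def)
      hence "H x0 - x0 = 0" using uf_sf_zero ufH by blast
      thus False using hx by simp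
    qed
    have "\<bar>\<phi> 0\<bar> \<le> mu ^ m * Ms" for m
    proof -
      have np: "n ^ m = Suc (n ^ m - 1)" using n2 by simp
      have "\<bar>\<phi> 0\<bar> \<le> \<bar>(\<phi> ^^ Suc (n ^ m - 1)) 0\<bar>" by (rule one_dim[OF c\<phi> i\<phi> b\<phi> nz])
      also have "\<dots> = \<bar>sf ((H ^^ (n ^ m)) x0 - x0)\<bar>" unfolding itr np[symmetric]
        by (simp add: sf_scale sf_ee)
      also have "\<dots> \<le> mu ^ m * Ms" by (rule Km)
      finally show ?thesis .
    qed
    moreover obtain m where m: "mu ^ m < \<bar>\<phi> 0\<bar> / (\<bar>Ms\<bar> + 1)"
      using real_arch_pow_inv[of "\<bar>\<phi> 0\<bar> / (\<bar>Ms\<bar> + 1)" mu] nz mu_lt by auto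
    moreover have "mu ^ m * Ms \<le> mu ^ m * (\<bar>Ms\<bar> + 1)" using mu_pos by (intro mult_left_mono) auto
    moreover have "mu ^ m * (\<bar>Ms\<bar> + 1) < \<bar>\<phi> 0\<bar>" using m by (simp add: field_simps)
    ultimately show False by (smt (verit))
  qed
  have "(G ^^ q) x = x + iv W" for x using Hid[of x] by (simp add: H_def ivmW algebra_simps)
  thus ?thesis using q0 by blast
qed

end


lemma eval_append: "eval_word h h' f f' (u @ w) = eval_word h h' f f' u \<circ> eval_word h h' f f' w"
  by (induction u) (auto simp: o_assoc)

lemma eval_rep: "eval_word h h' f f' (replicate N (GB, True)) = f ^^ N"
  by (induction N) auto

definition evR :: "nat \<Rightarrow> word \<Rightarrow> real \<Rightarrow> real" where
  "evR n = eval_word (\<lambda>x. real n * x) (\<lambda>x. x / real n) (\<lambda>x. x + 1) (\<lambda>x. x - 1)"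

lemma evR_rep: "evR n (replicate N (GB, True)) = (\<lambda>x. x + real N)"
proof -
  have "((\<lambda>x::real. x + 1) ^^ N) = (\<lambda>x. x + real N)"
    by (induction N) (auto simp: fun_eq_iff)
  thus ?thesis by (simp add: evR_def eval_rep)
qed

lemma bs_eq_evR:
  assumes "bs_eq n u w" "n \<ge> 1"
  shows "evR n u = evR n w"
  using assms(1)
proof (induction rule: bs_eq.induct)
  case (bs_cancel u x e v)
  have "evR n [(x, e), (x, \<not> e)] = id"
    using assms(2) by (cases x; cases e) (auto simp: evR_def fun_eq_iff)
  hence c: "evR n (u @ [(x, e), (x, \<not> e)] @ v) = evR n u \<circ> id \<circ> evR n v"
    unfolding evR_def eval_append by (simp only: o_assoc)
  show ?case unfolding c by (simp add: evR_def eval_append)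
next
  case (bs_rel u v)
  have "evR n [(GA, True), (GB, True), (GA, False)] = evR n (replicate n (GB, True))"
    using assms(2) by (simp add: evR_rep) (simp add: evR_def fun_eq_iff field_simps)
  hence c: "evR n (u @ [(GA, True), (GB, True), (GA, False)] @ v) = evR n u \<circ> evR n (replicate n (GB, True)) \<circ> evR n v"
    unfolding evR_def eval_append by (simp only: o_assoc)
  show ?case unfolding c by (simp add: evR_def eval_append)
qed auto

lemma not_bs_rep:
  assumes "N > 0" "n \<ge> 1"
  shows "\<not> bs_eq n (replicate N (GB, True)) []"
proof
  assume "bs_eq n (replicate N (GB, True)) []"
  hence "evR n (replicate N (GB, True)) 0 = evR n [] 0" using bs_eq_evR assms(2) by metis
  hence "real N = 0" unfolding evR_rep by (simp add: evR_def)
  thus False using assms(1) by simp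
qed



lemma det_mmul: "det (mmul X Y) = det X * det Y"
  by (cases X; cases Y) (simp add: algebra_simps)

lemma mat_ext: assumes "\<And>k. mv M (iv k) = mv N (iv k)" shows "M = N"
proof -
  obtain a b c d where M: "M = (a,b,c,d)" by (cases M) auto
  obtain a' b' c' d' where N: "N = (a',b',c',d')" by (cases N) auto
  have "mv M (iv (1,0)) = mv N (iv (1,0))" "mv M (iv (0,1)) = mv N (iv (0,1))" using assms by blast+
  thus ?thesis by (simp add: M N mv_def)
qed

lemma cont_mv: "continuous_on UNIV (mv M)"
proof -
  obtain a b c d where M: "M = (a,b,c,d)" by (cases M) auto
  have e: "mv M = (\<lambda>z. (of_int a * fst z + of_int b * snd z, of_int c * fst z + of_int d * snd z))"
    by (simp add: fun_eq_iff M mv_def)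
  show ?thesis unfolding e by (intro continuous_intros)
qed

lemma lift_pow: assumes "\<And>x. pp (F x) = f (pp x)" shows "pp ((F ^^ j) x) = (f ^^ j) (pp x)"
  by (induction j) (simp_all add: assms)

lemma lift_pow_mat:
  assumes "\<And>x k. F (x + iv k) = F x + mv B (iv k)"
  shows "(F ^^ j) (x + iv k) = (F ^^ j) x + mv (mpow B j) (iv k)"
proof (induction j)
  case 0 thus ?case by simp
next
  case (Suc j)
  have "(F ^^ Suc j) (x + iv k) = F ((F ^^ j) x + iv (imv (mpow B j) k))"
    using Suc by (simp add: mv_iv)
  also have "\<dots> = F ((F ^^ j) x) + mv B (mv (mpow B j) (iv k))" by (simp add: assms mv_iv)
  finally show ?case by (simp add: mv_mmul)
qed


lemma mv_zero[simp]: "mv M 0 = 0"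
  by (cases M) (simp add: mv_def zero_prod_def)

theorem mainTheorem15:
  fixes n :: nat and a b c d :: int
  assumes "n \<ge> 2"
    and "a * d - b * c = 1"
    and "\<bar>a + d\<bar> > 2"
    and "\<exists>(l::real) v1 v2. (v1, v2) \<noteq> (0, 0) \<and> of_int a * v1 + of_int b * v2 = l * v1
            \<and> of_int c * v1 + of_int d * v2 = l * v2 \<and> l > real n"
  shows "\<not> (\<exists>f f'. homeomorphism torus torus f f'
           \<and> (\<forall>p\<in>torus. torus_aut a b c d (f (torus_aut d (-b) (-c) a p)) = (f ^^ n) p)
           \<and> (\<forall>w. (\<forall>p\<in>torus. eval_word (torus_aut a b c d) (torus_aut d (-b) (-c) a) f f' w p = p)
                   \<longrightarrow> bs_eq n w []))"
proof
  assume "\<exists>f f'. homeomorphism torus torus f f'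
           \<and> (\<forall>p\<in>torus. torus_aut a b c d (f (torus_aut d (-b) (-c) a p)) = (f ^^ n) p)
           \<and> (\<forall>w. (\<forall>p\<in>torus. eval_word (torus_aut a b c d) (torus_aut d (-b) (-c) a) f f' w p = p)
                   \<longrightarrow> bs_eq n w [])"
  then obtain f f' where hom: "homeomorphism torus torus f f'"
    and conj: "\<And>p. p \<in> torus \<Longrightarrow> torus_aut a b c d (f (torus_aut d (-b) (-c) a p)) = (f ^^ n) p"
    and faith: "\<And>w. (\<forall>p\<in>torus. eval_word (torus_aut a b c d) (torus_aut d (-b) (-c) a) f f' w p = p)
                   \<Longrightarrow> bs_eq n w []"
    by blast
  obtain l v1 v2 where ev: "(v1, v2) \<noteq> (0, 0)" "of_int a * v1 + of_int b * v2 = l * v1"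
    "of_int c * v1 + of_int d * v2 = l * v2" "l > real n" using assms(4) by blast
  have ch: "l^2 - of_int (a+d) * l + 1 = 0" by (rule eig_char[OF ev(1-3) assms(2)])
  interpret H: hyp a b c d l n using assms(1-3) ch ev(4) by unfold_locales auto
  define h where "h = torus_aut a b c d"
  define h' where "h' = torus_aut d (-b) (-c) a"
  have h_pp: "h (pp x) = pp (mv H.A x)" for x by (simp add: h_def H.A_def torus_aut_pp)
  have h'_pp: "h' (pp x) = pp (mv H.A' x)" for x by (simp add: h'_def H.A'_def torus_aut_pp)
  have h_t: "h p \<in> torus" if "p \<in> torus" for p using torus_pp[OF that] h_pp pp_torus by metis
  have h'_t: "h' p \<in> torus" if "p \<in> torus" for p using torus_pp[OF that] h'_pp pp_torus by metis
  have hh': "h (h' p) = p" if pt: "p \<in> torus" for p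
  proof -
    obtain x where "pp x = p" using torus_pp[OF pt] by blast
    thus ?thesis by (metis h_pp h'_pp H.mvAA'(1))
  qed
  have h'h: "h' (h p) = p" if pt: "p \<in> torus" for p
  proof -
    obtain x where "pp x = p" using torus_pp[OF pt] by blast
    thus ?thesis by (metis h_pp h'_pp H.mvAA'(2))
  qed
  have fc: "continuous_on torus f" and fim: "f ` torus = torus" and f'c: "continuous_on torus f'"
    and f'im: "f' ` torus = torus" and f'f: "\<And>p. p \<in> torus \<Longrightarrow> f' (f p) = p"
    using hom unfolding homeomorphism_def by auto
  have ft: "f p \<in> torus" if "p \<in> torus" for p using fim that by blast
  have fjt: "(f ^^ j) p \<in> torus" if "p \<in> torus" for j p using that by (induction j) (auto intro: ft)
  have fjinj: "p = p'" if "p \<in> torus" "p' \<in> torus" "(f ^^ j) p = (f ^^ j) p'" for j p p'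
    using that
  proof (induction j arbitrary: p p')
    case (Suc j)
    have "(f ^^ j) p = (f ^^ j) p'"
      using Suc.prems f'f[OF fjt[OF Suc.prems(1)]] f'f[OF fjt[OF Suc.prems(2)]] by (metis funpow_simps_right(2) o_apply funpow.simps(2))
    thus ?case using Suc by blast
  qed simp
  have tconj: "h ((f ^^ m) (h' p)) = (f ^^ (n * m)) p" if "p \<in> torus" for m p
    using that
  proof (induction m)
    case 0 thus ?case using hh' by simp
  next
    case (Suc m)
    define X where "X = h ((f ^^ m) (h' p))"
    have Xt: "X \<in> torus" unfolding X_def by (intro h_t fjt h'_t Suc.prems)
    have "(f ^^ Suc m) (h' p) = f (h' X)"
      unfolding X_def using h'h[OF fjt[OF h'_t[OF Suc.prems]]] by simp
    hence "h ((f ^^ Suc m) (h' p)) = (f ^^ n) X" using conj[OF Xt] by (simp add: h_def h'_def)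
    also have "\<dots> = (f ^^ n) ((f ^^ (n * m)) p)" unfolding X_def using Suc by simp
    also have "\<dots> = (f ^^ (n * Suc m)) p" by (simp add: funpow_add)
    finally show ?case .
  qed
  obtain F where Fc: "continuous_on UNIV F" and Fl: "\<And>x. pp (F x) = f (pp x)"
    using lift_map[OF fc] fim by blast
  obtain B where FB: "\<And>x k. F (x + iv k) = F x + mv B (iv k)" using lift_matrix[OF Fc Fl] by blast
  obtain F' where F'c: "continuous_on UNIV F'" and F'l: "\<And>x. pp (F' x) = f' (pp x)"
    using lift_map[OF f'c] f'im by blast
  obtain B' where FB': "\<And>x k. F' (x + iv k) = F' x + mv B' (iv k)" using lift_matrix[OF F'c F'l] by blast
  have cFF: "continuous_on UNIV (\<lambda>x. F' (F x))" by (rule continuous_on_compose2[OF F'c Fc]) simp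
  have ppFF: "pp (F' (F x)) = pp x" for x by (simp add: Fl F'l f'f pp_torus)
  obtain k0 where k0: "\<And>x. F' (F x) = x + iv k0"
    using lift_unique[OF cFF continuous_on_id, of thesis] ppFF by auto
  have "mv (mmul B' B) (iv k) = mv I2 (iv k)" for k
  proof -
    have "F' (F (0 + iv k)) = F' (F 0 + iv (imv B k))" using FB[of 0 k] by (simp add: mv_iv)
    also have "\<dots> = iv k0 + mv B' (mv B (iv k))" using k0[of 0] FB'[of "F 0" "imv B k"] by (simp add: mv_iv)
    finally show ?thesis using k0[of "0 + iv k"] by (simp add: mv_mmul add.commute)
  qed
  hence "mmul B' B = I2" by (rule mat_ext)
  hence "det B' * det B = 1" using det_mmul[of B' B] by (simp add: I2_def)
  hence dB: "det B = 1 \<or> det B = -1" using zmult_eq_1_iff by blast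
  have cL: "continuous_on UNIV (\<lambda>x. mv H.A (F (mv H.A' x)))"
    by (intro continuous_on_compose2[OF cont_mv] continuous_on_compose2[OF Fc] cont_mv) auto
  have ppL: "pp (mv H.A (F (mv H.A' x))) = pp ((F ^^ n) x)" for x
  proof -
    have "pp (mv H.A (F (mv H.A' x))) = h (pp (F (mv H.A' x)))" by (rule h_pp[symmetric])
    also have "\<dots> = h (f (h' (pp x)))" by (simp only: Fl h'_pp)
    also have "\<dots> = (f ^^ n) (pp x)" using conj[OF pp_torus] by (simp add: h_def h'_def)
    also have "\<dots> = pp ((F ^^ n) x)" by (simp add: lift_pow[of F f, OF Fl])
    finally show "pp (mv H.A (F (mv H.A' x))) = pp ((F ^^ n) x)" .
  qed
  obtain v0 where v0: "\<And>x. mv H.A (F (mv H.A' x)) = (F ^^ n) x + iv v0"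
    using lift_unique[OF cL cont_pow[OF Fc, of n]] ppL by auto
  have "mv (mmul H.A (mmul B H.A')) (iv k) = mv (mpow B n) (iv k)" for k
  proof -
    have e1: "mv H.A' (0 + iv k) = 0 + iv (imv H.A' k)" by (simp add: mv_iv)
    have e2: "F (0 + iv (imv H.A' k)) = F 0 + mv B (mv H.A' (iv k))" by (simp only: FB mv_iv)
    have e3: "mv H.A (F 0 + mv B (mv H.A' (iv k))) = mv H.A (F 0) + mv (mmul H.A (mmul B H.A')) (iv k)"
      by (simp only: mv_add mv_mmul)
    have "mv H.A (F (mv H.A' (0 + iv k))) = mv H.A (F (mv H.A' 0)) + mv (mmul H.A (mmul B H.A')) (iv k)"
      unfolding e1 e2 e3 by simp
    hence 1: "mv H.A (F (mv H.A' (0 + iv k))) = mv H.A (F (mv H.A' 0)) + mv (mmul H.A (mmul B H.A')) (iv k)" .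
    have 2: "mv H.A (F (mv H.A' (0 + iv k))) = mv H.A (F (mv H.A' 0)) + mv (mpow B n) (iv k)"
      unfolding v0 lift_pow_mat[OF FB] by simp
    show ?thesis using 1 2 by simp
  qed
  hence Bn: "mmul H.A (mmul B H.A') = mpow B n" by (rule mat_ext)
  have rel: "mmul H.A B = mmul (mpow B n) H.A"
    unfolding Bn[symmetric] by (simp add: mmul_assoc H.AA')
  have dA: "det H.A = 1" using assms(2) by (simp add: H.A_def)
  have tA: "\<bar>tr H.A\<bar> > 2" using assms(3) by (simp add: H.A_def)
  have B12: "mpow B 12 = I2" by (rule fin_order[OF dA tA rel dB assms(1)])
  \<comment> \<open>the homotopically trivial power\<close>
  define G where "G = F ^^ 12"
  have Gc: "continuous_on UNIV G" unfolding G_def by (rule cont_pow[OF Fc])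
  have Gper: "G (x + iv k) = G x + iv k" for x k unfolding G_def lift_pow_mat[OF FB] B12 by simp
  have Gl: "pp (G x) = (f ^^ 12) (pp x)" for x unfolding G_def by (rule lift_pow[of F f, OF Fl])
  have Ginj: "inj G"
  proof (rule injI)
    fix x y assume "G x = G y"
    hence "(f ^^ 12) (pp x) = (f ^^ 12) (pp y)" using Gl by metis
    hence "pp x = pp y" using fjinj pp_torus by blast
    then obtain k where "x - y = iv k" using pp_eq_iff isZ2_iv by blast
    hence xy: "x = y + iv k" by (simp add: algebra_simps)
    hence "G y + iv k = G y" using \<open>G x = G y\<close> Gper by simp
    hence "iv k = 0" by simp
    thus "x = y" using xy by simp
  qed
  have cLG: "continuous_on UNIV (\<lambda>x. mv H.A (G (mv H.A' x)))"
    by (intro continuous_on_compose2[OF cont_mv] continuous_on_compose2[OF Gc] cont_mv) auto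
  have ppLG: "pp (mv H.A (G (mv H.A' x))) = pp ((G ^^ n) x)" for x
  proof -
    have "pp (mv H.A (G (mv H.A' x))) = h (pp (G (mv H.A' x)))" by (rule h_pp[symmetric])
    also have "\<dots> = h ((f ^^ 12) (h' (pp x)))" by (simp only: Gl h'_pp)
    also have "\<dots> = (f ^^ (n * 12)) (pp x)" by (rule tconj[OF pp_torus])
    also have "\<dots> = pp ((G ^^ n) x)" unfolding G_def funpow_mult lift_pow[of F f, OF Fl] by (simp add: mult.commute)
    finally show "pp (mv H.A (G (mv H.A' x))) = pp ((G ^^ n) x)" .
  qed
  obtain v where vG: "\<And>x. mv H.A (G (mv H.A' x)) = (G ^^ n) x + iv v"
    using lift_unique[OF cLG cont_pow[OF Gc, of n]] ppLG by auto
  obtain q W where q: "q > 0" and qW: "\<And>x. (G ^^ q) x = x + iv W"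
    using H.lift_main[OF Gc Gper Ginj vG] by blast
  have fixp: "(f ^^ (12 * q)) p = p" if pt: "p \<in> torus" for p
  proof -
    obtain x where x: "pp x = p" using torus_pp[OF pt] by blast
    have "(f ^^ (12 * q)) p = pp ((F ^^ (12 * q)) x)" using x by (simp add: lift_pow[of F f, OF Fl])
    also have "\<dots> = pp ((G ^^ q) x)" by (simp add: G_def funpow_mult)
    also have "\<dots> = p" using x by (simp add: qW pp_add_iv)
    finally show ?thesis .
  qed
  have "bs_eq n (replicate (12 * q) (GB, True)) []"
    by (rule faith) (simp add: eval_rep fixp)
  moreover have "\<not> bs_eq n (replicate (12 * q) (GB, True)) []"
    by (rule not_bs_rep) (use q assms(1) in auto)
  ultimately show False by blast
qed


end
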